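(* Let $\mathcal{D}\subset\mathbb{R}^2$ be open and bounded, $\mathcal{K}=\{0,1,2\}$, $\boldsymbol{\phi}=(\phi_0,\phi_1,\phi_2)\in\mathcal{C}^\infty(\mathbb{R}^2,\mathbb{R}^3)$ with $\phi_0\equiv0$. Let $\hat x\in\mathcal{E}_{\mathcal{K}}(\boldsymbol{\phi})$ and assume $D\widehat{\boldsymbol{\phi}}_{\mathcal{K}}(\hat x)$ is invertible. Then, with the angles $\beta_0,\beta_1,\beta_2$ at $\hat x$ defined below, $\max_{k\in\mathcal{K}}\beta_k<\pi$ and $\min_{k\in\mathcal{K}}\beta_k>0$.
   Context: For $j\in\mathcal{K}$, $\Omega_j(\boldsymbol{\phi})=\operatorname{int}\{x\in\mathcal{D}\mid\phi_j(x)\le\phi_m(x)\ \forall m\ne j\}$; for $\mathcal{I}\subset\mathcal{K}$, $\mathcal{E}_{\mathcal{I}}(\boldsymbol{\phi})=\bigcap_{j\in\mathcal{I}}\partial\Omega_j(\boldsymbol{\phi})$; $\widehat{\boldsymbol{\phi}}_{\mathcal{K}}=(\phi_0-\phi_1,\phi_0-\phi_2)$. For $\mathcal{I}\in\{\{0,1\},\{1,2\},\{0,2\}\}$, $\mathbb{D}_{\mathcal{I}}$ denotes the half-tangent to the curve $\mathcal{E}_{\mathcal{I}}(\boldsymbol{\phi})$ at the triple point $\hat x$. Using polar coordinates centered at $\hat x$ with angle $\vartheta\in[0,2\pi]$, $\vartheta=0$ along $\mathbb{D}_{\{0,2\}}$, let $\vartheta_0$ be the angle of $\mathbb{D}_{\{0,1\}}$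 and $\vartheta_1$ that of $\mathbb{D}_{\{1,2\}}$, where the labels of $\phi_0$ and $\phi_2$ (and of the corresponding phases) are exchanged if necessary so that $\vartheta_0\le\vartheta_1$. Then $\beta_0=\vartheta_0$, $\beta_1=\vartheta_1-\vartheta_0$, $\beta_2=2\pi-\vartheta_1$ (so $\beta_0+\beta_1+\beta_2=2\pi$). *)

theory Defs
  imports "HOL-Analysis.Analysis"
begin

definition Kset :: "nat set" where "Kset = {0,1,2}"

text \<open>C-infinity regularity of a real function on the plane (coinductively:
 differentiable everywhere, and every partial derivative is again C-infinity).\<close>
coinductive smooth2 :: "(real^2 \<Rightarrow> real) \<Rightarrow> bool" where
  "(\<forall>x. g differentiable (at x)) \<Longrightarrow>
   (\<forall>i. smooth2 (\<lambda>x. frechet_derivative g (at x) (axis i 1))) \<Longrightarrow> smooth2 g"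

definition Omega :: "(real^2) set \<Rightarrow> (nat \<Rightarrow> real^2 \<Rightarrow> real) \<Rightarrow> nat \<Rightarrow> (real^2) set" where
  "Omega D phi j = interior {x \<in> D. \<forall>m\<in>Kset. m \<noteq> j \<longrightarrow> phi j x \<le> phi m x}"

definition Eset :: "(real^2) set \<Rightarrow> (nat \<Rightarrow> real^2 \<Rightarrow> real) \<Rightarrow> nat set \<Rightarrow> (real^2) set" where
  "Eset D phi I = (\<Inter>j\<in>I. frontier (Omega D phi j))"

definition phihat :: "(nat \<Rightarrow> real^2 \<Rightarrow> real) \<Rightarrow> real^2 \<Rightarrow> real^2" where
  "phihat phi x = vector [phi 0 x - phi 1 x, phi 0 x - phi 2 x]"

definition half_tangent :: "(real^2) set \<Rightarrow> real^2 \<Rightarrow> real^2 \<Rightarrow> bool" where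
  "half_tangent S p d \<longleftrightarrow> norm d = 1 \<and> p islimpt S \<and>
     ((\<lambda>x. (1 / norm (x - p)) *\<^sub>R (x - p)) \<longlongrightarrow> d) (at p within S)"

definition to_cplx :: "real^2 \<Rightarrow> complex" where
  "to_cplx v = Complex (v $ 1) (v $ 2)"

definition polar_angle :: "real^2 \<Rightarrow> real^2 \<Rightarrow> real" where
  "polar_angle u v = Arg2pi (to_cplx v / to_cplx u)"

text \<open>The angles beta_0, beta_1, beta_2 at the triple point, given the half-tangent
 directions d01, d12, d02.  theta = 0 along d02; the labels 0 and 2 are exchanged
 if necessary so that theta_0 <= theta_1, i.e. theta_0/theta_1 are the min/max of the
 polar angles of d01 and d12.\<close>
definition betas :: "real^2 \<Rightarrow> real^2 \<Rightarrow> real^2 \<Rightarrow> real \<times> real \<times> real" where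
  "betas d01 d12 d02 =
    (let a = polar_angle d02 d01; b = polar_angle d02 d12;
         t0 = min a b; t1 = max a b
     in (t0, t1 - t0, 2 * pi - t1))"

end

theory Submission
  imports Defs
begin


lemma angle_aux:
  fixes z w :: complex and \<alpha> \<beta> \<gamma> :: real
  assumes pos: "\<alpha> > 0" "\<beta> > 0" "\<gamma> > 0"
    and rel: "of_real \<alpha> * z + of_real \<beta> * w + of_real \<gamma> = 0"
    and imz: "Im z > 0"
  shows "0 < Arg2pi z \<and> Arg2pi z < pi \<and> pi < Arg2pi w \<and> Arg2pi w - Arg2pi z < pi"
proof -
  have im: "\<alpha> * Im z + \<beta> * Im w = 0"
    using arg_cong[OF rel, of Im] by simp
  have imw: "Im w < 0"
  proof -
    have "\<beta> * Im w = - (\<alpha> * Im z)" using im by linarith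
    moreover have "\<alpha> * Im z > 0" using pos imz by simp
    ultimately have "\<beta> * Im w < 0" by linarith
    thus ?thesis using pos by (simp add: mult_less_0_iff)
  qed
  have a: "0 < Arg2pi z \<and> Arg2pi z < pi" using imz Arg2pi_lt_pi by blast
  have b1: "pi < Arg2pi w" using imw Arg2pi_le_pi[of w] by linarith
  have b2: "Arg2pi w < 2*pi" using Arg2pi by blast
  have rel2: "\<alpha> * Im (z * cnj z) + \<beta> * Im (w * cnj z) + \<gamma> * Im (cnj z) = 0"
    using arg_cong[OF rel, of "\<lambda>u. Im (u * cnj z)"] by (simp add: algebra_simps)
  have "Im (z * cnj z) = 0" by simp
  hence "\<beta> * Im (w * cnj z) = \<gamma> * Im z" using rel2 by simp
  hence "\<beta> * Im (w * cnj z) > 0" using pos imz by simp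
  hence pw: "Im (w * cnj z) > 0" using pos by (simp add: zero_less_mult_iff)
  have ez: "z = of_real (norm z) * exp(\<i> * of_real (Arg2pi z))" and ew: "w = of_real (norm w) * exp(\<i> * of_real (Arg2pi w))"
    using Arg2pi_eq by blast+
  have "Im (w * cnj z) = norm w * norm z * sin (Arg2pi w - Arg2pi z)"
  proof -
    have "Im (w * cnj z) = Im ((of_real (norm w) * exp(\<i> * of_real (Arg2pi w))) * cnj (of_real (norm z) * exp(\<i> * of_real (Arg2pi z))))"
      using ez ew by simp
    also have "\<dots> = norm w * norm z * (sin (Arg2pi w) * cos (Arg2pi z) - cos (Arg2pi w) * sin (Arg2pi z))"
      by (simp add: cis_conv_exp[symmetric] algebra_simps)
    also have "\<dots> = norm w * norm z * sin (Arg2pi w - Arg2pi z)" by (simp add: sin_diff)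
    finally show ?thesis .
  qed
  hence "sin (Arg2pi w - Arg2pi z) > 0" using pw by (smt (verit) norm_ge_zero mult_nonneg_nonneg zero_less_mult_iff)
  hence "Arg2pi w - Arg2pi z < pi"
    using sin_le_zero[of "Arg2pi w - Arg2pi z"] a b2 by linarith
  thus ?thesis using a b1 by blast
qed

lemma angle_main:
  fixes z w :: complex and \<alpha> \<beta> \<gamma> :: real
  assumes pos: "\<alpha> > 0" "\<beta> > 0" "\<gamma> > 0"
    and rel: "of_real \<alpha> * z + of_real \<beta> * w + of_real \<gamma> = 0"
    and imz: "Im z \<noteq> 0"
  shows "max (min (Arg2pi z) (Arg2pi w)) (max (max (Arg2pi z) (Arg2pi w) - min (Arg2pi z) (Arg2pi w)) (2*pi - max (Arg2pi z) (Arg2pi w))) < pi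
      \<and> min (min (Arg2pi z) (Arg2pi w)) (min (max (Arg2pi z) (Arg2pi w) - min (Arg2pi z) (Arg2pi w)) (2*pi - max (Arg2pi z) (Arg2pi w))) > 0"
proof (cases "Im z > 0")
  case True
  have "0 < Arg2pi z \<and> Arg2pi z < pi \<and> pi < Arg2pi w \<and> Arg2pi w - Arg2pi z < pi"
    using angle_aux[OF pos rel True] .
  moreover have "Arg2pi w < 2*pi" using Arg2pi by blast
  ultimately show ?thesis by (simp add: min_def max_def)
next
  case False
  hence iz: "Im z < 0" using imz by linarith
  have im: "\<alpha> * Im z + \<beta> * Im w = 0"
    using arg_cong[OF rel, of Im] by simp
  have "\<alpha> * Im z < 0" using iz pos by (simp add: mult_pos_neg)
  hence "\<beta> * Im w > 0" using im by linarith
  hence imw: "Im w > 0" using pos by (simp add: zero_less_mult_iff)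
  have rel': "of_real \<beta> * w + of_real \<alpha> * z + of_real \<gamma> = 0" using rel by (simp add: algebra_simps)
  have "0 < Arg2pi w \<and> Arg2pi w < pi \<and> pi < Arg2pi z \<and> Arg2pi z - Arg2pi w < pi"
    using angle_aux[OF pos(2,1,3) rel' imw] .
  moreover have "Arg2pi z < 2*pi" using Arg2pi by blast
  ultimately show ?thesis by (simp add: min_def max_def)
qed

lemma to_cplx_add: "to_cplx (x + y) = to_cplx x + to_cplx y"
  by (simp add: to_cplx_def complex_eq_iff)
lemma to_cplx_scale: "to_cplx (c *\<^sub>R x) = of_real c * to_cplx x"
  by (simp add: to_cplx_def complex_eq_iff)
lemma to_cplx_0: "to_cplx 0 = 0"
  by (simp add: to_cplx_def complex_eq_iff)
lemma to_cplx_inj: "to_cplx x = to_cplx y \<Longrightarrow> x = y"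
  by (simp add: to_cplx_def complex_eq_iff vec_eq_iff forall_2)

lemma betas_ok:
  fixes d01 d12 d02 :: "real^2" and \<alpha> \<beta> \<gamma> :: real
  assumes pos: "\<alpha> > 0" "\<beta> > 0" "\<gamma> > 0"
    and rel: "\<alpha> *\<^sub>R d01 + \<beta> *\<^sub>R d12 + \<gamma> *\<^sub>R d02 = 0"
    and nz: "d02 \<noteq> 0" and indep: "\<forall>t. d01 \<noteq> t *\<^sub>R d02"
  shows "case betas d01 d12 d02 of (b0, b1, b2) \<Rightarrow>
               max b0 (max b1 b2) < pi \<and> min b0 (min b1 b2) > 0"
proof -
  define A where "A = to_cplx d02"
  have A0: "A \<noteq> 0" using nz to_cplx_inj[of d02 0] by (auto simp: A_def to_cplx_0)
  define z where "z = to_cplx d01 / A"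
  define w where "w = to_cplx d12 / A"
  have "of_real \<alpha> * to_cplx d01 + of_real \<beta> * to_cplx d12 + of_real \<gamma> * A = 0"
    using arg_cong[OF rel, of to_cplx] by (simp add: to_cplx_add to_cplx_scale to_cplx_0 A_def)
  hence "(of_real \<alpha> * z + of_real \<beta> * w + of_real \<gamma>) * A = 0"
    using A0 by (simp add: z_def w_def algebra_simps)
  hence rel2: "of_real \<alpha> * z + of_real \<beta> * w + of_real \<gamma> = 0" using A0 by simp
  have imz: "Im z \<noteq> 0"
  proof
    assume "Im z = 0"
    hence "z = of_real (Re z)" by (simp add: complex_eq_iff)
    hence "to_cplx d01 = of_real (Re z) * A" using A0 by (simp add: z_def field_simps)
    hence "to_cplx d01 = to_cplx (Re z *\<^sub>R d02)" by (simp add: to_cplx_scale A_def)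
    hence "d01 = Re z *\<^sub>R d02" by (rule to_cplx_inj)
    thus False using indep by blast
  qed
  have pa: "polar_angle d02 d01 = Arg2pi z" "polar_angle d02 d12 = Arg2pi w"
    by (simp_all add: polar_angle_def z_def w_def A_def)
  show ?thesis
    using angle_main[OF pos rel2 imz] by (simp add: betas_def Let_def pa)
qed



lemma tangent_limit:
  fixes F L Li :: "real^2 \<Rightarrow> real^2"
  assumes der: "(F has_derivative L) (at p)" and F0: "F p = 0"
    and lin: "linear Li" and inv1: "\<And>h. Li (L h) = h" and inv2: "\<And>y. L (Li y) = y"
    and S: "\<And>x. x \<in> S \<Longrightarrow> \<exists>k\<ge>0. F x = k *\<^sub>R r" and nr: "r \<noteq> 0"
  shows "((\<lambda>x. (1 / norm (x - p)) *\<^sub>R (x - p)) \<longlongrightarrow> (1 / norm (Li r)) *\<^sub>R Li r) (at p within S)"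
proof -
  define \<epsilon> where "\<epsilon> x = (F x - L (x - p)) /\<^sub>R norm (x - p)" for x
  have dw: "(F has_derivative L) (at p within S)" using der has_derivative_at_withinI by blast
  have "(\<epsilon> \<longlongrightarrow> 0) (at p within S)"
    using dw unfolding has_derivative_at_within \<epsilon>_def by (simp add: F0)
  moreover have bl: "bounded_linear Li" using lin linear_conv_bounded_linear by blast
  ultimately have li0: "((\<lambda>x. Li (\<epsilon> x)) \<longlongrightarrow> 0) (at p within S)"
    using bounded_linear.tendsto_zero by blast
  have linL: "linear L" using der has_derivative_linear by blast
  have r0: "Li r \<noteq> 0" using inv2[of r] nr linL linear_0 by metis
  define m where "m = norm (Li r)"
  have m0: "m > 0" using r0 by (simp add: m_def)
  have bound: "norm ((1 / norm (x - p)) *\<^sub>R (x - p) - (1 / m) *\<^sub>R Li r) \<le> 2 * norm (Li (\<epsilon> x))"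
    if xS: "x \<in> S" and xp: "x \<noteq> p" for x
  proof -
    define h where "h = x - p"
    define n where "n = norm h"
    have n0: "n > 0" using xp by (simp add: n_def h_def)
    define u where "u = (1 / n) *\<^sub>R h"
    have nu: "norm u = 1" using n0 by (simp add: u_def n_def)
    have Fx: "F x = L h + n *\<^sub>R \<epsilon> x" using n0 by (simp add: \<epsilon>_def n_def h_def)
    have "Li (F x) = h + n *\<^sub>R Li (\<epsilon> x)"
      using Fx lin inv1 by (simp add: linear_add linear_scale)
    moreover obtain k where k: "k \<ge> 0" "F x = k *\<^sub>R r" using S[OF xS] by blast
    moreover have "Li (F x) = k *\<^sub>R Li r"
      using k lin by (metis linear_scale)
    ultimately have "k *\<^sub>R Li r = h + n *\<^sub>R Li (\<epsilon> x)" by simp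
    hence "(1/n) *\<^sub>R (k *\<^sub>R Li r) = (1/n) *\<^sub>R (h + n *\<^sub>R Li (\<epsilon> x))" by simp
    hence cu: "(k / n) *\<^sub>R Li r = u + Li (\<epsilon> x)"
      using n0 by (simp add: u_def scaleR_add_right)
    define c where "c = k / n"
    have c0: "c \<ge> 0" using n0 k by (simp add: c_def)
    have "c * m = norm (c *\<^sub>R Li r)" using c0 by (simp add: m_def)
    also have "\<dots> = norm (u + Li (\<epsilon> x))" using cu by (simp add: c_def)
    finally have "c * m = norm (u + Li (\<epsilon> x))" .
    hence cm: "\<bar>c * m - 1\<bar> \<le> norm (Li (\<epsilon> x))"
      using norm_triangle_ineq3[of "u + Li (\<epsilon> x)" u] nu by simp
    have "u - (1/m) *\<^sub>R Li r = (c - 1/m) *\<^sub>R Li r - Li (\<epsilon> x)"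
      using cu by (simp add: c_def algebra_simps)
    hence "norm (u - (1/m) *\<^sub>R Li r) \<le> norm ((c - 1/m) *\<^sub>R Li r) + norm (Li (\<epsilon> x))"
      using norm_triangle_ineq4 by metis
    also have "norm ((c - 1/m) *\<^sub>R Li r) = \<bar>c * m - 1\<bar>"
    proof -
      have "norm ((c - 1/m) *\<^sub>R Li r) = \<bar>c - 1/m\<bar> * m" by (simp add: m_def)
      also have "\<dots> = \<bar>(c - 1/m) * m\<bar>" using m0 by (simp add: abs_mult)
      also have "(c - 1/m) * m = c * m - 1" using m0 by (simp add: field_simps)
      finally show ?thesis .
    qed
    finally show ?thesis using cm by (simp add: u_def n_def h_def)
  qed
  have ev: "eventually (\<lambda>x. norm ((1 / norm (x - p)) *\<^sub>R (x - p) - (1 / m) *\<^sub>R Li r) \<le> 2 * norm (Li (\<epsilon> x))) (at p within S)"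
    unfolding eventually_at_filter using bound by (auto intro: always_eventually)
  have "((\<lambda>x. 2 * norm (Li (\<epsilon> x))) \<longlongrightarrow> 0) (at p within S)"
    using tendsto_mult_right_zero[OF tendsto_norm_zero[OF li0]] .
  hence "((\<lambda>x. (1 / norm (x - p)) *\<^sub>R (x - p) - (1 / m) *\<^sub>R Li r) \<longlongrightarrow> 0) (at p within S)"
    using Lim_null_comparison[OF ev] by blast
  thus ?thesis unfolding m_def LIM_zero_iff .
qed



lemma closure_pt:
  fixes F G :: "real^2 \<Rightarrow> real^2"
  assumes V: "open V" "y \<in> V" and cG: "continuous_on V G" and GD: "G ` V \<subseteq> D"
    and FG: "\<And>z. z \<in> V \<Longrightarrow> F (G z) = z"
    and P: "\<And>t. t > 0 \<Longrightarrow> P (y + t *\<^sub>R w)"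
  shows "G y \<in> closure {x\<in>D. P (F x)}"
proof (rule Lim_in_closed_set[where F = "at_right (0::real)" and f = "\<lambda>t. G (y + t *\<^sub>R w)"])
  show "closed (closure {x\<in>D. P (F x)})" by simp
  have lim: "((\<lambda>t. y + t *\<^sub>R w) \<longlongrightarrow> y) (at_right (0::real))"
  proof -
    have "((\<lambda>t. y + t *\<^sub>R w) \<longlongrightarrow> y + 0 *\<^sub>R w) (at_right (0::real))"
      by (intro tendsto_add tendsto_const tendsto_scaleR tendsto_ident_at)
    thus ?thesis by simp
  qed
  have ic: "isCont G y" using cG V by (simp add: continuous_on_eq_continuous_at)
  show "((\<lambda>t. G (y + t *\<^sub>R w)) \<longlongrightarrow> G y) (at_right 0)"
    using isCont_tendsto_compose[OF ic lim] .
  have ev1: "eventually (\<lambda>t. y + t *\<^sub>R w \<in> V) (at_right (0::real))"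
    using topological_tendstoD[OF lim V(1) V(2)] .
  have ev2: "eventually (\<lambda>t. t > 0) (at_right (0::real))"
    by (simp add: eventually_at_right_less)
  show "eventually (\<lambda>t. G (y + t *\<^sub>R w) \<in> closure {x\<in>D. P (F x)}) (at_right 0)"
    using eventually_conj[OF ev1 ev2]
  proof (rule eventually_mono)
    fix t assume t: "y + t *\<^sub>R w \<in> V \<and> 0 < t"
    have "G (y + t *\<^sub>R w) \<in> D" using GD t by (meson image_eqI subsetD)
    moreover have "P (F (G (y + t *\<^sub>R w)))" using FG[of "y + t *\<^sub>R w"] P[of t] t by simp
    ultimately have "G (y + t *\<^sub>R w) \<in> {x\<in>D. P (F x)}" by simp
    thus "G (y + t *\<^sub>R w) \<in> closure {x\<in>D. P (F x)}" by (meson closure_subset subsetD)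
  qed
  show "at_right (0::real) \<noteq> bot" by simp
qed

lemma islimpt_pt:
  fixes f :: "real \<Rightarrow> 'a::topological_space"
  assumes lim: "(f \<longlongrightarrow> p) (at_right 0)"
    and ev: "eventually (\<lambda>t. f t \<in> S \<and> f t \<noteq> p) (at_right 0)"
  shows "p islimpt S"
  unfolding islimpt_def
proof (intro allI impI)
  fix T assume "p \<in> T" "open T"
  hence "eventually (\<lambda>t. f t \<in> T) (at_right 0)" using topological_tendstoD[OF lim, of T] by simp
  hence "eventually (\<lambda>t. f t \<in> T \<and> f t \<in> S \<and> f t \<noteq> p) (at_right (0::real))"
    using eventually_conj[OF _ ev] by simp
  from eventually_happens'[OF trivial_limit_at_right_real this]
  obtain t where "f t \<in> T \<and> f t \<in> S \<and> f t \<noteq> p" ..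
  thus "\<exists>y\<in>S. y \<in> T \<and> y \<noteq> p" by blast
qed



lemma smooth_diff: "smooth2 g \<Longrightarrow> g differentiable (at x)"
  by (erule smooth2.cases) auto

lemma smooth_cont: "smooth2 g \<Longrightarrow> continuous_on S g"
  by (meson continuous_at_imp_continuous_on differentiable_imp_continuous_within smooth_diff)

lemma smooth_partial_cont: "smooth2 g \<Longrightarrow> continuous_on S (\<lambda>x. frechet_derivative g (at x) (axis i 1))"
proof -
  assume "smooth2 g"
  hence "smooth2 (\<lambda>x. frechet_derivative g (at x) (axis i 1))" using smooth2.cases by blast
  thus ?thesis by (rule smooth_cont)
qed

lemma front_mem:
  assumes "open U0" "U0 \<subseteq> S" "x \<in> closure U0" "x \<in> closure (- S)"
  shows "x \<in> frontier (interior S)"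
proof -
  have "U0 \<subseteq> interior S" using assms interior_maximal by blast
  hence "x \<in> closure (interior S)" using assms(3) closure_mono by blast
  moreover have "x \<notin> interior S" using assms(4) interior_complement[of "- S"] by simp
  ultimately show ?thesis by (simp add: frontier_def)
qed

lemma front_sub:
  assumes "closed C" "S \<subseteq> C"
  shows "frontier (interior S) \<subseteq> C"
proof -
  have "frontier (interior S) \<subseteq> closure (interior S)" by (simp add: frontier_def)
  also have "\<dots> \<subseteq> closure S" by (simp add: closure_mono interior_subset)
  also have "\<dots> \<subseteq> C" using assms closure_minimal by blast
  finally show ?thesis .
qed

lemma front_pt:
  fixes F G :: "real^2 \<Rightarrow> real^2"
  assumes V: "open V" "y \<in> V" and cG: "continuous_on V G" and GD: "G ` V \<subseteq> D"
    and FG: "\<And>z. z \<in> V \<Longrightarrow> F (G z) = z"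
    and op: "open {x\<in>D. P (F x)}" and PQ: "\<And>v. P v \<Longrightarrow> Q v"
    and w1: "\<And>t. t > 0 \<Longrightarrow> P (y + t *\<^sub>R w1)"
    and w2: "\<And>t. t > 0 \<Longrightarrow> \<not> Q (y + t *\<^sub>R w2)"
  shows "G y \<in> frontier (interior {x\<in>D. Q (F x)})"
proof (rule front_mem[OF op])
  show "{x\<in>D. P (F x)} \<subseteq> {x\<in>D. Q (F x)}" using PQ by blast
  show "G y \<in> closure {x\<in>D. P (F x)}" using closure_pt[OF V cG GD FG, of P w1] w1 by blast
  have "G y \<in> closure {x\<in>UNIV. \<not> Q (F x)}" using closure_pt[OF V cG _ FG, of UNIV "\<lambda>v. \<not> Q v" w2] w2 by blast
  moreover have "closure {x\<in>UNIV. \<not> Q (F x)} \<subseteq> closure (- {x\<in>D. Q (F x)})" by (rule closure_mono) blast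
  ultimately show "G y \<in> closure (- {x\<in>D. Q (F x)})" by blast
qed

lemma norm2: "norm (v::real^2) = sqrt ((v$1)^2 + (v$2)^2)"
  by (simp add: norm_vec_def L2_set_def UNIV_2)



theorem theorem5p1:
  fixes D :: "(real^2) set" and phi :: "nat \<Rightarrow> real^2 \<Rightarrow> real" and xhat :: "real^2"
  assumes "open D" and "bounded D"
    and "\<forall>j\<in>Kset. smooth2 (phi j)"
    and "phi 0 = (\<lambda>x. 0)"
    and "xhat \<in> Eset D phi Kset" and "xhat \<in> D"
    and "invertible (jacobian (phihat phi) (at xhat))"
  shows "(\<exists>d01 d12 d02. half_tangent (Eset D phi {0,1}) xhat d01 \<and>
            half_tangent (Eset D phi {1,2}) xhat d12 \<and>
            half_tangent (Eset D phi {0,2}) xhat d02) \<and>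
         (\<forall>d01 d12 d02. half_tangent (Eset D phi {0,1}) xhat d01 \<and>
            half_tangent (Eset D phi {1,2}) xhat d12 \<and>
            half_tangent (Eset D phi {0,2}) xhat d02 \<longrightarrow>
            (case betas d01 d12 d02 of (b0, b1, b2) \<Rightarrow>
               max b0 (max b1 b2) < pi \<and> min b0 (min b1 b2) > 0))"
proof -
  define F where "F = phihat phi"
  define p where "p = xhat"
  have sm1: "smooth2 (phi 1)" and sm2: "smooth2 (phi 2)" using assms(3) by (auto simp: Kset_def)
  have F1: "F x $ 1 = - phi 1 x" and F2: "F x $ 2 = - phi 2 x" for x
    by (simp_all add: F_def phihat_def assms(4))
  have Feq: "F = (\<lambda>x. (- phi 1 x) *\<^sub>R axis 1 1 + (- phi 2 x) *\<^sub>R axis 2 1)"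
    by (rule ext) (simp add: vec_eq_iff forall_2 F1 F2 axis_def)
  define d where "d j x = frechet_derivative (phi j) (at x)" for j x
  have dj: "(phi j has_derivative d j x) (at x)" if "smooth2 (phi j)" for j x
    unfolding d_def using smooth_diff[OF that] frechet_derivative_works by blast
  define DF :: "real^2 \<Rightarrow> real^2 \<Rightarrow> real^2" where "DF x = (\<lambda>h. (- d 1 x h) *\<^sub>R axis 1 1 + (- d 2 x h) *\<^sub>R axis 2 1)" for x
  have derF: "(F has_derivative DF x) (at x)" for x
    unfolding Feq DF_def
    by (intro has_derivative_add has_derivative_scaleR_left has_derivative_minus dj sm1 sm2)
  have blF: "bounded_linear (DF x)" for x using derF has_derivative_bounded_linear by blast
  define F' where "F' x = Blinfun (DF x)" for x
  have F'apply: "blinfun_apply (F' x) = DF x" for x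
    unfolding F'_def using blF bounded_linear_Blinfun_apply by blast
  have contF': "continuous_on D F'"
  proof (rule continuous_on_blinfun_componentwise)
    fix i :: "real^2" assume "i \<in> Basis"
    then obtain k where k: "i = axis k 1" by (auto simp: Basis_vec_def)
    show "continuous_on D (\<lambda>x. blinfun_apply (F' x) i)"
      unfolding F'apply DF_def k d_def
      by (intro continuous_intros smooth_partial_cont sm1 sm2)
  qed
  have contF: "continuous_on UNIV F" 
    unfolding Feq by (intro continuous_intros smooth_cont sm1 sm2)
  have jac: "jacobian F (at p) = matrix (DF p)"
    unfolding jacobian_def using frechet_derivative_at[OF derF[of p]] by simp
  obtain N where MN: "matrix (DF p) ** N = mat 1" "N ** matrix (DF p) = mat 1"
    using assms(7) unfolding F_def[symmetric] p_def[symmetric] jac invertible_def by blast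
  define Li where "Li y = N *v y" for y
  have linLi: "linear Li" unfolding Li_def by (simp add: matrix_vector_mul_linear)
  have linDF: "linear (DF p)" using blF bounded_linear.linear by blast
  have inv1: "Li (DF p h) = h" for h
    unfolding Li_def using matrix_works[OF linDF[folded linear_matrix_vector_mul_eq], of h] MN(2)
    by (metis matrix_vector_mul_assoc matrix_vector_mul_lid)
  have inv2: "DF p (Li y) = y" for y
    unfolding Li_def using matrix_works[OF linDF[folded linear_matrix_vector_mul_eq], of "N *v y"] MN(1)
    by (metis matrix_vector_mul_assoc matrix_vector_mul_lid)
  define invf where "invf = Blinfun Li"
  have blLi: "bounded_linear Li" using linLi linear_conv_bounded_linear by blast
  have invf: "invf o\<^sub>L F' p = id_blinfun"
    by (rule blinfun_eqI) (simp add: invf_def bounded_linear_Blinfun_apply[OF blLi] F'apply inv1)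
  obtain U' V G G' where U': "open U'" "U' \<subseteq> D" "p \<in> U'" and V: "open V" "F p \<in> V"
      and hom: "homeomorphism U' V F G"
    using inverse_function_theorem[OF assms(1), of F F' p invf] derF F'apply contF' assms(6) invf
    unfolding p_def by metis
  have FG: "\<And>z. z \<in> V \<Longrightarrow> F (G z) = z" and GF: "G (F p) = p" and cG: "continuous_on V G"
    and GV: "G ` V \<subseteq> D"
    using hom U' unfolding homeomorphism_def by auto
  define Q0 where "Q0 v \<longleftrightarrow> v$1 \<le> 0 \<and> v$2 \<le> (0::real)" for v :: "real^2"
  define Q1 where "Q1 v \<longleftrightarrow> v$1 \<ge> 0 \<and> v$1 \<ge> (v$2::real)" for v :: "real^2"
  define Q2 where "Q2 v \<longleftrightarrow> v$2 \<ge> 0 \<and> v$2 \<ge> (v$1::real)" for v :: "real^2"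
  define P0 where "P0 v \<longleftrightarrow> v$1 < 0 \<and> v$2 < (0::real)" for v :: "real^2"
  define P1 where "P1 v \<longleftrightarrow> v$1 > 0 \<and> v$1 > (v$2::real)" for v :: "real^2"
  define P2 where "P2 v \<longleftrightarrow> v$2 > 0 \<and> v$2 > (v$1::real)" for v :: "real^2"
  have ph1: "phi 1 x = - (F x $ 1)" and ph2: "phi 2 x = - (F x $ 2)" for x using F1 F2 by simp_all
  have ph1s: "phi (Suc 0) x = - (F x $ 1)" for x using ph1 by simp
  have Om0: "Omega D phi 0 = interior {x\<in>D. Q0 (F x)}"
    unfolding Omega_def Kset_def by (rule arg_cong[where f=interior]) (auto simp: assms(4) ph1 ph1s ph2 Q0_def)
  have Om1: "Omega D phi 1 = interior {x\<in>D. Q1 (F x)}"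
    unfolding Omega_def Kset_def by (rule arg_cong[where f=interior]) (auto simp: assms(4) ph1 ph1s ph2 Q1_def)
  have Om2: "Omega D phi 2 = interior {x\<in>D. Q2 (F x)}"
    unfolding Omega_def Kset_def by (rule arg_cong[where f=interior]) (auto simp: assms(4) ph1 ph1s ph2 Q2_def)
  have cF1: "continuous_on UNIV (\<lambda>x. F x $ 1)" unfolding F1 by (intro continuous_intros smooth_cont sm1)
  have cF2: "continuous_on UNIV (\<lambda>x. F x $ 2)" unfolding F2 by (intro continuous_intros smooth_cont sm2)
  have c0: "continuous_on UNIV (\<lambda>x. 0::real)" by simp
  have op0: "open {x\<in>D. P0 (F x)}"
  proof -
    have eq: "{x\<in>D. P0 (F x)} = D \<inter> ({x. F x $ 1 < 0} \<inter> {x. F x $ 2 < 0})" by (auto simp: P0_def)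
    show ?thesis unfolding eq by (intro open_Int assms(1) open_Collect_less[OF cF1 c0] open_Collect_less[OF cF2 c0])
  qed
  have op1: "open {x\<in>D. P1 (F x)}"
  proof -
    have eq: "{x\<in>D. P1 (F x)} = D \<inter> ({x. 0 < F x $ 1} \<inter> {x. F x $ 2 < F x $ 1})" by (auto simp: P1_def)
    show ?thesis unfolding eq by (intro open_Int assms(1) open_Collect_less[OF c0 cF1] open_Collect_less[OF cF2 cF1])
  qed
  have op2: "open {x\<in>D. P2 (F x)}"
  proof -
    have eq: "{x\<in>D. P2 (F x)} = D \<inter> ({x. 0 < F x $ 2} \<inter> {x. F x $ 1 < F x $ 2})" by (auto simp: P2_def)
    show ?thesis unfolding eq by (intro open_Int assms(1) open_Collect_less[OF c0 cF2] open_Collect_less[OF cF1 cF2])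
  qed
  have cl0: "closed {x. Q0 (F x)}"
  proof -
    have eq: "{x. Q0 (F x)} = {x. F x $ 1 \<le> 0} \<inter> {x. F x $ 2 \<le> 0}" by (auto simp: Q0_def)
    show ?thesis unfolding eq by (intro closed_Int closed_Collect_le[OF cF1 c0] closed_Collect_le[OF cF2 c0])
  qed
  have cl1: "closed {x. Q1 (F x)}"
  proof -
    have eq: "{x. Q1 (F x)} = {x. 0 \<le> F x $ 1} \<inter> {x. F x $ 2 \<le> F x $ 1}" by (auto simp: Q1_def)
    show ?thesis unfolding eq by (intro closed_Int closed_Collect_le[OF c0 cF1] closed_Collect_le[OF cF2 cF1])
  qed
  have cl2: "closed {x. Q2 (F x)}"
  proof -
    have eq: "{x. Q2 (F x)} = {x. 0 \<le> F x $ 2} \<inter> {x. F x $ 1 \<le> F x $ 2}" by (auto simp: Q2_def)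
    show ?thesis unfolding eq by (intro closed_Int closed_Collect_le[OF c0 cF2] closed_Collect_le[OF cF1 cF2])
  qed
  have fs0: "frontier (Omega D phi 0) \<subseteq> {x. Q0 (F x)}"
    unfolding Om0 by (rule front_sub[OF cl0]) blast
  have fs1: "frontier (Omega D phi 1) \<subseteq> {x. Q1 (F x)}"
    unfolding Om1 by (rule front_sub[OF cl1]) blast
  have fs2: "frontier (Omega D phi 2) \<subseteq> {x. Q2 (F x)}"
    unfolding Om2 by (rule front_sub[OF cl2]) blast
  have E01: "Eset D phi {0,1} = frontier (Omega D phi 0) \<inter> frontier (Omega D phi 1)"
    by (simp add: Eset_def)
  have E02: "Eset D phi {0,2} = frontier (Omega D phi 0) \<inter> frontier (Omega D phi 2)"
    by (simp add: Eset_def)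
  have E12: "Eset D phi {1,2} = frontier (Omega D phi 1) \<inter> frontier (Omega D phi 2)"
    by (simp add: Eset_def)
  have pE: "p \<in> frontier (Omega D phi 0)" "p \<in> frontier (Omega D phi 1)" "p \<in> frontier (Omega D phi 2)"
    using assms(5) by (simp_all add: p_def Eset_def Kset_def)
  have Fp0: "F p = 0"
  proof -
    have "Q0 (F p)" "Q1 (F p)" "Q2 (F p)" using fs0 fs1 fs2 pE by blast+
    thus ?thesis by (simp add: vec_eq_iff forall_2 Q0_def Q1_def Q2_def)
  qed
  have mem01: "G y \<in> Eset D phi {0,1}" if "y \<in> V" "y$1 = 0" "y$2 < 0" for y
  proof -
    have "G y \<in> frontier (Omega D phi 0)" unfolding Om0
      by (rule front_pt[OF V(1) that(1) cG GV FG op0, of Q0 "vector [-1,0]" "vector [1,0]"]) (use that in \<open>auto simp: P0_def Q0_def\<close>)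
    moreover have "G y \<in> frontier (Omega D phi 1)" unfolding Om1
      by (rule front_pt[OF V(1) that(1) cG GV FG op1, of Q1 "vector [1,0]" "vector [-1,0]"]) (use that in \<open>auto simp: P1_def Q1_def\<close>)
    ultimately show ?thesis unfolding E01 by blast
  qed
  have mem02: "G y \<in> Eset D phi {0,2}" if "y \<in> V" "y$2 = 0" "y$1 < 0" for y
  proof -
    have "G y \<in> frontier (Omega D phi 0)" unfolding Om0
      by (rule front_pt[OF V(1) that(1) cG GV FG op0, of Q0 "vector [0,-1]" "vector [0,1]"]) (use that in \<open>auto simp: P0_def Q0_def\<close>)
    moreover have "G y \<in> frontier (Omega D phi 2)" unfolding Om2
      by (rule front_pt[OF V(1) that(1) cG GV FG op2, of Q2 "vector [0,1]" "vector [0,-1]"]) (use that in \<open>auto simp: P2_def Q2_def\<close>)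
    ultimately show ?thesis unfolding E02 by blast
  qed
  have mem12: "G y \<in> Eset D phi {1,2}" if "y \<in> V" "y$1 = y$2" "y$1 > 0" for y
  proof -
    have "G y \<in> frontier (Omega D phi 1)" unfolding Om1
      by (rule front_pt[OF V(1) that(1) cG GV FG op1, of Q1 "vector [1,0]" "vector [-1,0]"]) (use that in \<open>auto simp: P1_def Q1_def\<close>)
    moreover have "G y \<in> frontier (Omega D phi 2)" unfolding Om2
      by (rule front_pt[OF V(1) that(1) cG GV FG op2, of Q2 "vector [0,1]" "vector [0,-1]"]) (use that in \<open>auto simp: P2_def Q2_def\<close>)
    ultimately show ?thesis unfolding E12 by blast
  qed
  have limpt: "p islimpt E" if memE: "\<And>s. s > 0 \<Longrightarrow> s *\<^sub>R r \<in> V \<Longrightarrow> G (s *\<^sub>R r) \<in> E" and r0: "r \<noteq> 0" for r E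
  proof (rule islimpt_pt)
    have lim: "((\<lambda>s. s *\<^sub>R r) \<longlongrightarrow> F p) (at_right (0::real))"
    proof -
      have "((\<lambda>s. s *\<^sub>R r) \<longlongrightarrow> 0 *\<^sub>R r) (at_right (0::real))"
        by (intro tendsto_scaleR tendsto_const tendsto_ident_at)
      thus ?thesis by (simp add: Fp0)
    qed
    have ic: "isCont G (F p)" using cG V by (simp add: continuous_on_eq_continuous_at)
    show "((\<lambda>s. G (s *\<^sub>R r)) \<longlongrightarrow> p) (at_right 0)"
      using isCont_tendsto_compose[OF ic lim] by (simp add: GF)
    have ev1: "eventually (\<lambda>s. s *\<^sub>R r \<in> V) (at_right (0::real))"
      using topological_tendstoD[OF lim V(1) V(2)] .
    have ev2: "eventually (\<lambda>s. s > 0) (at_right (0::real))"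
      by (simp add: eventually_at_right_less)
    show "eventually (\<lambda>s. G (s *\<^sub>R r) \<in> E \<and> G (s *\<^sub>R r) \<noteq> p) (at_right 0)"
      using eventually_conj[OF ev1 ev2]
    proof (rule eventually_mono)
      fix s :: real assume s: "s *\<^sub>R r \<in> V \<and> 0 < s"
      have "G (s *\<^sub>R r) \<noteq> p"
      proof
        assume "G (s *\<^sub>R r) = p"
        hence "s *\<^sub>R r = 0" using FG[of "s *\<^sub>R r"] s Fp0 by simp
        thus False using s r0 by simp
      qed
      thus "G (s *\<^sub>R r) \<in> E \<and> G (s *\<^sub>R r) \<noteq> p" using memE s by blast
    qed
  qed
  have tang: "half_tangent E p ((1 / norm (Li r)) *\<^sub>R Li r) \<and>
      (\<forall>d'. half_tangent E p d' \<longrightarrow> d' = (1 / norm (Li r)) *\<^sub>R Li r)"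
    if memE: "\<And>s. s > 0 \<Longrightarrow> s *\<^sub>R r \<in> V \<Longrightarrow> G (s *\<^sub>R r) \<in> E" and r0: "r \<noteq> 0"
      and Sk: "\<And>x. x \<in> E \<Longrightarrow> \<exists>k\<ge>0. F x = k *\<^sub>R r" for r E
  proof -
    have lp: "p islimpt E" using limpt[OF memE r0] by blast
    have lim: "((\<lambda>x. (1 / norm (x - p)) *\<^sub>R (x - p)) \<longlongrightarrow> (1 / norm (Li r)) *\<^sub>R Li r) (at p within E)"
      by (rule tangent_limit[OF derF[of p] Fp0 linLi inv1 inv2 Sk r0])
    have Lr: "Li r \<noteq> 0" using inv2[of r] r0 linDF linear_0 by metis
    have n1: "norm ((1 / norm (Li r)) *\<^sub>R Li r) = 1" using Lr by simp
    have nb: "\<not> trivial_limit (at p within E)" using lp trivial_limit_within by blast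
    show ?thesis
    proof
      show "half_tangent E p ((1 / norm (Li r)) *\<^sub>R Li r)"
        unfolding half_tangent_def using n1 lp lim by blast
      show "\<forall>d'. half_tangent E p d' \<longrightarrow> d' = (1 / norm (Li r)) *\<^sub>R Li r"
        unfolding half_tangent_def using tendsto_unique[OF nb] lim by blast
    qed
  qed
  define r01 where "r01 = (vector [0, -1] :: real^2)"
  define r02 where "r02 = (vector [-1, 0] :: real^2)"
  define r12 where "r12 = (vector [1, 1] :: real^2)"
  have r01c: "r01 $ 1 = 0" "r01 $ 2 = -1" and r02c: "r02 $ 1 = -1" "r02 $ 2 = 0"
    and r12c: "r12 $ 1 = 1" "r12 $ 2 = 1" by (simp_all add: r01_def r02_def r12_def)
  have nz: "r01 \<noteq> 0" "r02 \<noteq> 0" "r12 \<noteq> 0"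
    using r01c r02c r12c by (metis zero_index zero_neq_neg_one, metis zero_index zero_neq_neg_one, metis zero_index zero_neq_one)
  have t01: "half_tangent (Eset D phi {0,1}) p ((1 / norm (Li r01)) *\<^sub>R Li r01) \<and>
      (\<forall>d'. half_tangent (Eset D phi {0,1}) p d' \<longrightarrow> d' = (1 / norm (Li r01)) *\<^sub>R Li r01)"
  proof (rule tang[OF _ nz(1)])
    fix s :: real assume "s > 0" "s *\<^sub>R r01 \<in> V"
    thus "G (s *\<^sub>R r01) \<in> Eset D phi {0,1}" by (intro mem01) (auto simp: r01c)
  next
    fix x assume "x \<in> Eset D phi {0,1}"
    hence "Q0 (F x)" "Q1 (F x)" using fs0 fs1 E01 by auto
    hence "F x = (- (F x $ 2)) *\<^sub>R r01" "- (F x $ 2) \<ge> 0"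
      by (auto simp: vec_eq_iff forall_2 r01c Q0_def Q1_def)
    thus "\<exists>k\<ge>0. F x = k *\<^sub>R r01" by blast
  qed
  have t02: "half_tangent (Eset D phi {0,2}) p ((1 / norm (Li r02)) *\<^sub>R Li r02) \<and>
      (\<forall>d'. half_tangent (Eset D phi {0,2}) p d' \<longrightarrow> d' = (1 / norm (Li r02)) *\<^sub>R Li r02)"
  proof (rule tang[OF _ nz(2)])
    fix s :: real assume "s > 0" "s *\<^sub>R r02 \<in> V"
    thus "G (s *\<^sub>R r02) \<in> Eset D phi {0,2}" by (intro mem02) (auto simp: r02c)
  next
    fix x assume "x \<in> Eset D phi {0,2}"
    hence "Q0 (F x)" "Q2 (F x)" using fs0 fs2 E02 by auto
    hence "F x = (- (F x $ 1)) *\<^sub>R r02" "- (F x $ 1) \<ge> 0"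
      by (auto simp: vec_eq_iff forall_2 r02c Q0_def Q2_def)
    thus "\<exists>k\<ge>0. F x = k *\<^sub>R r02" by blast
  qed
  have t12: "half_tangent (Eset D phi {1,2}) p ((1 / norm (Li r12)) *\<^sub>R Li r12) \<and>
      (\<forall>d'. half_tangent (Eset D phi {1,2}) p d' \<longrightarrow> d' = (1 / norm (Li r12)) *\<^sub>R Li r12)"
  proof (rule tang[OF _ nz(3)])
    fix s :: real assume "s > 0" "s *\<^sub>R r12 \<in> V"
    thus "G (s *\<^sub>R r12) \<in> Eset D phi {1,2}" by (intro mem12) (auto simp: r12c)
  next
    fix x assume "x \<in> Eset D phi {1,2}"
    hence "Q1 (F x)" "Q2 (F x)" using fs1 fs2 E12 by auto
    hence "F x = (F x $ 1) *\<^sub>R r12" "F x $ 1 \<ge> 0"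
      by (auto simp: vec_eq_iff forall_2 r12c Q1_def Q2_def)
    thus "\<exists>k\<ge>0. F x = k *\<^sub>R r12" by blast
  qed
  define a where "a = norm (Li r01)"
  define b where "b = norm (Li r12)"
  define c where "c = norm (Li r02)"
  have Lnz: "Li r \<noteq> 0" if "r \<noteq> 0" for r using inv2[of r] that linDF linear_0 by metis
  have pos: "a > 0" "b > 0" "c > 0" using Lnz nz by (simp_all add: a_def b_def c_def)
  have rsum: "r01 + r12 + r02 = 0" by (simp add: vec_eq_iff forall_2 r01c r02c r12c)
  have rel: "a *\<^sub>R ((1 / a) *\<^sub>R Li r01) + b *\<^sub>R ((1 / b) *\<^sub>R Li r12) + c *\<^sub>R ((1 / c) *\<^sub>R Li r02) = 0"
  proof -
    have "a *\<^sub>R ((1 / a) *\<^sub>R Li r01) + b *\<^sub>R ((1 / b) *\<^sub>R Li r12) + c *\<^sub>R ((1 / c) *\<^sub>R Li r02)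
        = Li r01 + Li r12 + Li r02" using pos by simp
    also have "\<dots> = Li (r01 + r12 + r02)" using linLi by (simp add: linear_add)
    also have "\<dots> = 0" using rsum linLi linear_0 by simp
    finally show ?thesis .
  qed
  have d02nz: "(1 / c) *\<^sub>R Li r02 \<noteq> 0" using pos Lnz nz by simp
  have indep: "\<forall>t. (1 / a) *\<^sub>R Li r01 \<noteq> t *\<^sub>R ((1 / c) *\<^sub>R Li r02)"
  proof (intro allI notI)
    fix t assume h: "(1 / a) *\<^sub>R Li r01 = t *\<^sub>R ((1 / c) *\<^sub>R Li r02)"
    have "DF p ((1 / a) *\<^sub>R Li r01) = (1 / a) *\<^sub>R r01" using linDF inv2 by (simp add: linear_scale)
    moreover have "DF p (t *\<^sub>R ((1 / c) *\<^sub>R Li r02)) = (t / c) *\<^sub>R r02" using linDF inv2 by (simp add: linear_scale)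
    ultimately have "(1 / a) *\<^sub>R r01 = (t / c) *\<^sub>R r02" using h by simp
    hence "((1 / a) *\<^sub>R r01) $ 2 = ((t / c) *\<^sub>R r02) $ 2" by simp
    thus False using pos by (simp add: r01c r02c)
  qed
  have bet: "case betas ((1 / a) *\<^sub>R Li r01) ((1 / b) *\<^sub>R Li r12) ((1 / c) *\<^sub>R Li r02) of (b0, b1, b2) \<Rightarrow>
               max b0 (max b1 b2) < pi \<and> min b0 (min b1 b2) > 0"
    by (rule betas_ok[OF pos rel d02nz indep])
  have e01: "(1 / norm (Li r01)) *\<^sub>R Li r01 = (1 / a) *\<^sub>R Li r01" by (simp add: a_def)
  have e12: "(1 / norm (Li r12)) *\<^sub>R Li r12 = (1 / b) *\<^sub>R Li r12" by (simp add: b_def)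
  have e02: "(1 / norm (Li r02)) *\<^sub>R Li r02 = (1 / c) *\<^sub>R Li r02" by (simp add: c_def)
  show ?thesis
    unfolding p_def[symmetric]
  proof
    show "\<exists>d01 d12 d02. half_tangent (Eset D phi {0,1}) p d01 \<and>
            half_tangent (Eset D phi {1,2}) p d12 \<and> half_tangent (Eset D phi {0,2}) p d02"
      using t01 t12 t02 by blast
    show "\<forall>d01 d12 d02. half_tangent (Eset D phi {0,1}) p d01 \<and>
            half_tangent (Eset D phi {1,2}) p d12 \<and>
            half_tangent (Eset D phi {0,2}) p d02 \<longrightarrow>
            (case betas d01 d12 d02 of (b0, b1, b2) \<Rightarrow>
               max b0 (max b1 b2) < pi \<and> min b0 (min b1 b2) > 0)"
    proof (intro allI impI)
      fix d01 d12 d02 assume h: "half_tangent (Eset D phi {0,1}) p d01 \<and>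
            half_tangent (Eset D phi {1,2}) p d12 \<and> half_tangent (Eset D phi {0,2}) p d02"
      have "d01 = (1 / a) *\<^sub>R Li r01" using h t01 e01 by simp
      moreover have "d12 = (1 / b) *\<^sub>R Li r12" using h t12 e12 by simp
      moreover have "d02 = (1 / c) *\<^sub>R Li r02" using h t02 e02 by simp
      ultimately show "case betas d01 d12 d02 of (b0, b1, b2) \<Rightarrow>
               max b0 (max b1 b2) < pi \<and> min b0 (min b1 b2) > 0" using bet by simp
    qed
  qed
qed

end
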